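(* Let $K\subset\mathbb R^n$ be a convex body and let $u\in S^{n-1}$. Then \[ S_u(K^c)\subseteq\mathrm{conv}_c(S_u(K^c))\subseteq(S_uK)^c. \] In particular $\mathrm{Vol}(K)\,\mathrm{Vol}(K^c)\le\mathrm{Vol}(S_uK)\,\mathrm{Vol}((S_uK)^c)$.
   Context: $B(x,r)$ is the closed Euclidean ball. For $A\subseteq\mathbb R^n$, $A^c=\bigcap_{x\in A}B(x,1)$ and $\mathrm{conv}_c(A)=A^{cc}$. For a convex body $L$ and $u\in S^{n-1}$, the Steiner symmetral $S_u(L)$ is defined as follows: for $x\in P_{u^\perp}L$ write $L\cap(x+\mathbb Ru)=[x+a(x)u,x+b(x)u]$; then $S_u(L)=\{x+tu:\ x\in P_{u^\perp}L,\ |t|\le\tfrac{b(x)-a(x)}2\}$ (with $S_u(\emptyset)=\emptyset$). *)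

theory Defs
  imports "HOL-Analysis.Analysis"
begin

text \<open>c-dual: A^c = intersection of closed unit balls centred at points of A
  (empty intersection = whole space).\<close>
definition cdual :: "'a::euclidean_space set \<Rightarrow> 'a set" where
  "cdual A = (\<Inter>x\<in>A. cball x 1)"

definition conv_c :: "'a::euclidean_space set \<Rightarrow> 'a set" where
  "conv_c A = cdual (cdual A)"

definition proj_perp :: "'a::euclidean_space \<Rightarrow> 'a \<Rightarrow> 'a" where
  "proj_perp u y = y - (y \<bullet> u) *\<^sub>R u"

definition chord :: "'a::euclidean_space \<Rightarrow> 'a set \<Rightarrow> 'a \<Rightarrow> real set" where
  "chord u L x = {t. x + t *\<^sub>R u \<in> L}"

text \<open>Steiner symmetral: for a compact convex L, the chord over x is
  [x + a(x) u, x + b(x) u] with a(x) = Inf, b(x) = Sup of the chord parameters.\<close>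
definition steiner :: "'a::euclidean_space \<Rightarrow> 'a set \<Rightarrow> 'a set" where
  "steiner u L = {x + t *\<^sub>R u | x t. x \<in> proj_perp u ` L \<and>
      \<bar>t\<bar> \<le> (Sup (chord u L x) - Inf (chord u L x)) / 2}"

definition convex_body :: "'a::euclidean_space set \<Rightarrow> bool" where
  "convex_body K \<longleftrightarrow> compact K \<and> convex K \<and> interior K \<noteq> {}"

end

theory Submission
  imports Defs
begin

lemma vol_formula:
  fixes A :: "'a::euclidean_space set" and u :: 'a
  assumes A: "A \<in> sets borel" and u: "norm u = 1"
  shows "emeasure lborel A = (\<integral>\<^sup>+z. indicator {z. z \<bullet> u \<in> {0..1}} z * emeasure lborel (chord u A z) \<partial>lborel)"
proof -
  have PF: "pair_sigma_finite (lborel::'a measure) (lborel::real measure)"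
    by (simp add: pair_sigma_finite_def lborel.sigma_finite_measure_axioms)
  have uu: "u \<bullet> u = 1" using u by (simp add: dot_square_norm)
  have meas1: "(\<lambda>(w,t). indicator A w * indicator {0..1::real} (w \<bullet> u - t) :: ennreal) \<in> borel_measurable (lborel \<Otimes>\<^sub>M lborel)"
    using A by (auto simp: case_prod_unfold cong: measurable_cong_sets)
  have meas2: "(\<lambda>(z,t). indicator A (t *\<^sub>R u + z) * indicator {z. z \<bullet> u \<in> {0..1::real}} z :: ennreal) \<in> borel_measurable (lborel \<Otimes>\<^sub>M lborel)"
    using A by (auto simp: case_prod_unfold cong: measurable_cong_sets)
  have one: "(\<integral>\<^sup>+t. indicator {0..1::real} (w \<bullet> u - t) \<partial>lborel) = 1" for w
  proof -
    have "(\<lambda>t. indicator {0..1::real} (w \<bullet> u - t) :: ennreal) = indicator {w \<bullet> u - 1 .. w \<bullet> u}"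
      by (auto simp: indicator_def fun_eq_iff)
    then show ?thesis by simp
  qed
  have "emeasure lborel A = (\<integral>\<^sup>+w. indicator A w \<partial>lborel)"
    using A by simp
  also have "\<dots> = (\<integral>\<^sup>+w. \<integral>\<^sup>+t. indicator A w * indicator {0..1::real} (w \<bullet> u - t) \<partial>lborel \<partial>lborel)"
    by (subst nn_integral_cmult) (auto simp: one)
  also have "\<dots> = (\<integral>\<^sup>+t. \<integral>\<^sup>+w. indicator A w * indicator {0..1::real} (w \<bullet> u - t) \<partial>lborel \<partial>lborel)"
    using pair_sigma_finite.Fubini'[OF PF meas1] by simp
  also have "\<dots> = (\<integral>\<^sup>+t. \<integral>\<^sup>+z. indicator A (t *\<^sub>R u + z) * indicator {z. z \<bullet> u \<in> {0..1::real}} z \<partial>lborel \<partial>lborel)"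
  proof (rule nn_integral_cong)
    fix t :: real
    have "(\<integral>\<^sup>+w. indicator A w * indicator {0..1::real} (w \<bullet> u - t) \<partial>(distr lborel borel ((+) (t *\<^sub>R u)))) =
       (\<integral>\<^sup>+z. indicator A (t *\<^sub>R u + z) * indicator {z. z \<bullet> u \<in> {0..1::real}} z \<partial>lborel)"
      using A by (subst nn_integral_distr) (auto intro!: nn_integral_cong simp: indicator_def inner_add_left uu)
    then show "(\<integral>\<^sup>+w. indicator A w * indicator {0..1::real} (w \<bullet> u - t) \<partial>lborel) =
       (\<integral>\<^sup>+z. indicator A (t *\<^sub>R u + z) * indicator {z. z \<bullet> u \<in> {0..1::real}} z \<partial>lborel)"
      by (simp add: lborel_distr_plus)
  qed
  also have "\<dots> = (\<integral>\<^sup>+z. \<integral>\<^sup>+t. indicator A (t *\<^sub>R u + z) * indicator {z. z \<bullet> u \<in> {0..1::real}} z \<partial>lborel \<partial>lborel)"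
    using pair_sigma_finite.Fubini'[OF PF meas2] by simp
  also have "\<dots> = (\<integral>\<^sup>+z. indicator {z. z \<bullet> u \<in> {0..1}} z * emeasure lborel (chord u A z) \<partial>lborel)"
  proof (rule nn_integral_cong)
    fix z :: 'a
    have cm: "chord u A z \<in> sets borel"
    proof -
      have "chord u A z = (\<lambda>t. z + t *\<^sub>R u) -` A \<inter> space borel" by (auto simp: chord_def)
      also have "\<dots> \<in> sets borel" using A by (intro measurable_sets[OF _ A]) auto
      finally show ?thesis .
    qed
    have "(\<integral>\<^sup>+t. indicator A (t *\<^sub>R u + z) * indicator {z. z \<bullet> u \<in> {0..1::real}} z \<partial>lborel)
       = (\<integral>\<^sup>+t. indicator (chord u A z) t * indicator {z. z \<bullet> u \<in> {0..1::real}} z \<partial>lborel)"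
      by (intro nn_integral_cong) (auto simp: indicator_def chord_def add.commute)
    also have "\<dots> = indicator {z. z \<bullet> u \<in> {0..1}} z * emeasure lborel (chord u A z)"
      using cm by (subst nn_integral_multc) (auto simp: mult.commute)
    finally show "(\<integral>\<^sup>+t. indicator A (t *\<^sub>R u + z) * indicator {z. z \<bullet> u \<in> {0..1::real}} z \<partial>lborel)
       = indicator {z. z \<bullet> u \<in> {0..1}} z * emeasure lborel (chord u A z)" .
  qed
  finally show ?thesis .
qed


lemma proj_inner: "norm u = 1 \<Longrightarrow> proj_perp u y \<bullet> u = 0"
  by (simp add: proj_perp_def inner_diff_left dot_square_norm)

lemma proj_add: "norm u = 1 \<Longrightarrow> proj_perp u (y + t *\<^sub>R u) = proj_perp u y"
  by (simp add: proj_perp_def inner_add_left dot_square_norm algebra_simps)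

lemma proj_decomp: "y = proj_perp u y + (y \<bullet> u) *\<^sub>R u"
  by (simp add: proj_perp_def)

lemma proj_idem: "norm u = 1 \<Longrightarrow> proj_perp u (proj_perp u y) = proj_perp u y"
  using proj_inner[of u y] by (simp add: proj_perp_def[of u "proj_perp u y"])

lemma chord_compact:
  assumes "compact L" and u: "norm u = 1"
  shows "compact (chord u L z)"
proof -
  have cl: "closed (chord u L z)"
  proof -
    have "chord u L z = (\<lambda>t. z + t *\<^sub>R u) -` L" by (auto simp: chord_def)
    moreover have "closed ((\<lambda>t. z + t *\<^sub>R u) -` L)"
      by (rule continuous_closed_vimage) (auto intro!: continuous_intros simp: assms compact_imp_closed)
    ultimately show ?thesis by simp
  qed
  obtain B where B: "\<forall>x\<in>L. norm x \<le> B" using assms compact_imp_bounded bounded_iff by metis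
  have "bounded (chord u L z)"
    unfolding bounded_iff
  proof (intro exI ballI)
    fix t assume "t \<in> chord u L z"
    then have 1: "norm (z + t *\<^sub>R u) \<le> B" using B by (auto simp: chord_def)
    have "norm (t *\<^sub>R u) = norm ((z + t *\<^sub>R u) - z)" by simp
    also have "\<dots> \<le> norm (z + t *\<^sub>R u) + norm z" by (rule norm_triangle_ineq4)
    finally show "norm t \<le> B + norm z" using 1 u by simp
  qed
  with cl show ?thesis using compact_eq_bounded_closed by blast
qed


lemma chord_SupInf:
  assumes "compact L" "norm u = 1" "chord u L z \<noteq> {}"
  shows "Sup (chord u L z) \<in> chord u L z" "Inf (chord u L z) \<in> chord u L z"
    "Inf (chord u L z) \<le> Sup (chord u L z)"
proof -
  have c: "compact (chord u L z)" using chord_compact assms by blast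
  then have b: "bounded (chord u L z)" "closed (chord u L z)"
    using compact_imp_bounded compact_imp_closed by auto
  show "Sup (chord u L z) \<in> chord u L z"
    using closed_contains_Sup[OF assms(3) bounded_imp_bdd_above[OF b(1)] b(2)] .
  show "Inf (chord u L z) \<in> chord u L z"
    using closed_contains_Inf[OF assms(3) bounded_imp_bdd_below[OF b(1)] b(2)] .
  show "Inf (chord u L z) \<le> Sup (chord u L z)"
    using cInf_le_cSup[OF assms(3) bounded_imp_bdd_above[OF b(1)] bounded_imp_bdd_below[OF b(1)]] .
qed

lemma chord_interval:
  assumes "compact L" "convex L" "norm u = 1" "chord u L z \<noteq> {}"
  shows "chord u L z = {Inf (chord u L z) .. Sup (chord u L z)}"
proof -
  have c: "compact (chord u L z)" using chord_compact assms by blast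
  then have b: "bounded (chord u L z)"
    using compact_imp_bounded by auto
  have cv: "convex (chord u L z)"
    unfolding convex_def chord_def
  proof (clarify)
    fix x y :: real and a b :: real
    assume xy: "z + x *\<^sub>R u \<in> L" "z + y *\<^sub>R u \<in> L" "0 \<le> a" "0 \<le> b" "a + b = 1"
    have "z + (a * x + b * y) *\<^sub>R u = a *\<^sub>R (z + x *\<^sub>R u) + b *\<^sub>R (z + y *\<^sub>R u)"
      using xy(5) by (simp add: algebra_simps flip: scaleR_add_left)
    then show "z + (a *\<^sub>R x + b *\<^sub>R y) *\<^sub>R u \<in> L"
      using xy assms(2) by (simp add: convex_def)
  qed
  then have iv: "is_interval (chord u L z)" by (simp add: is_interval_convex_1)
  show ?thesis
  proof
    show "chord u L z \<subseteq> {Inf (chord u L z)..Sup (chord u L z)}"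
    proof
      fix x assume "x \<in> chord u L z"
      then show "x \<in> {Inf (chord u L z)..Sup (chord u L z)}"
        using cInf_lower[OF _ bounded_imp_bdd_below[OF b]] cSup_upper[OF _ bounded_imp_bdd_above[OF b]] by simp
    qed
    show "{Inf (chord u L z)..Sup (chord u L z)} \<subseteq> chord u L z"
    proof
      fix x assume x: "x \<in> {Inf (chord u L z)..Sup (chord u L z)}"
      have i: "\<forall>a\<in>chord u L z. \<forall>b\<in>chord u L z. \<forall>x. a \<le> x \<and> x \<le> b \<longrightarrow> x \<in> chord u L z"
        using iv unfolding is_interval_1 .
      show "x \<in> chord u L z"
        using i[rule_format, OF chord_SupInf(2)[OF assms(1,3,4)] chord_SupInf(1)[OF assms(1,3,4)]] x by simp
    qed
  qed
qed

definition hh :: "'a::euclidean_space \<Rightarrow> 'a set \<Rightarrow> 'a \<Rightarrow> real" where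
  "hh u L x = (Sup (chord u L x) - Inf (chord u L x)) / 2"

lemma steiner_iff:
  assumes u: "norm u = 1"
  shows "w \<in> steiner u L \<longleftrightarrow> proj_perp u w \<in> proj_perp u ` L \<and> \<bar>w \<bullet> u\<bar> \<le> hh u L (proj_perp u w)"
proof
  assume "w \<in> steiner u L"
  then obtain x t where w: "w = x + t *\<^sub>R u" "x \<in> proj_perp u ` L" "\<bar>t\<bar> \<le> hh u L x"
    by (auto simp: steiner_def hh_def)
  have x0: "x \<bullet> u = 0" using w(2) proj_inner[OF u] by auto
  have "proj_perp u w = proj_perp u x" by (simp add: w(1) proj_add[OF u])
  also have "\<dots> = x" using x0 by (simp add: proj_perp_def)
  finally have px: "proj_perp u w = x" .
  have uu: "u \<bullet> u = 1" using u by (simp add: dot_square_norm)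
  have wu: "w \<bullet> u = t" using w(1) x0 uu by (simp add: inner_add_left)
  show "proj_perp u w \<in> proj_perp u ` L \<and> \<bar>w \<bullet> u\<bar> \<le> hh u L (proj_perp u w)"
    using px wu w by simp
next
  assume "proj_perp u w \<in> proj_perp u ` L \<and> \<bar>w \<bullet> u\<bar> \<le> hh u L (proj_perp u w)"
  then show "w \<in> steiner u L"
    unfolding steiner_def hh_def
    by (intro CollectI exI[of _ "proj_perp u w"] exI[of _ "w \<bullet> u"]) (auto intro: proj_decomp)
qed


lemma cdual_compact:
  assumes "K \<noteq> {}" shows "compact (cdual K)"
proof -
  obtain k where k: "k \<in> K" using assms by blast
  have "closed (cdual K)" unfolding cdual_def by (auto intro: closed_INT)
  moreover have "bounded (cdual K)"
    by (rule bounded_subset[of "cball k 1"]) (use k in \<open>auto simp: cdual_def\<close>)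
  ultimately show ?thesis using compact_eq_bounded_closed by blast
qed

lemma cdual_convex: "convex (cdual K)"
  unfolding cdual_def by (auto intro: convex_INT)

lemma sub_cc: "A \<subseteq> cdual (cdual A)"
  by (auto simp: cdual_def dist_commute)

lemma cdual_anti: "A \<subseteq> B \<Longrightarrow> cdual B \<subseteq> cdual A"
  by (auto simp: cdual_def)

lemma norm_orth:
  assumes "w \<bullet> u = 0" "norm u = 1"
  shows "(norm (w + c *\<^sub>R u))^2 = (norm w)^2 + c^2"
proof -
  have uu: "u \<bullet> u = 1" using assms(2) by (simp add: dot_square_norm)
  have uw: "u \<bullet> w = 0" using assms(1) by (simp add: inner_commute)
  show ?thesis
    unfolding power2_norm_eq_inner by (simp add: inner_add_left inner_add_right uu uw assms(1) power2_eq_square)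
qed


lemma avg_sq: fixes a b W :: real
  assumes "W + a^2 \<le> 1" "W + b^2 \<le> 1"
  shows "((a + b)/2)^2 \<le> 1 - W"
proof -
  have "0 \<le> (a - b)^2" by simp
  then have "((a + b)/2)^2 \<le> (a^2 + b^2)/2" by (simp add: power2_eq_square field_simps)
  moreover have "(a^2 + b^2)/2 \<le> 1 - W" using add_mono[OF assms] by (simp add: field_simps)
  ultimately show ?thesis by (rule order_trans)
qed

lemma key_dist:
  assumes K: "compact K" "K \<noteq> {}" and u: "norm u = 1"
    and p: "p \<in> steiner u (cdual K)" and q: "q \<in> steiner u K"
  shows "dist q p \<le> 1"
proof -
  let ?C = "cdual K"
  have C: "compact ?C" using cdual_compact K by blast
  define x where "x = proj_perp u p"
  define y where "y = proj_perp u q"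
  have px: "x \<in> proj_perp u ` ?C" "\<bar>p \<bullet> u\<bar> \<le> hh u ?C x" unfolding x_def using iffD1[OF steiner_iff[OF u] p] by blast+
  have qy: "y \<in> proj_perp u ` K" "\<bar>q \<bullet> u\<bar> \<le> hh u K y" unfolding y_def using iffD1[OF steiner_iff[OF u] q] by blast+
  have ne1: "chord u ?C x \<noteq> {}"
  proof -
    obtain c where "c \<in> ?C" "x = proj_perp u c" using px by auto
    then have "x + (c \<bullet> u) *\<^sub>R u \<in> ?C" by (simp add: proj_perp_def)
    then have "c \<bullet> u \<in> chord u ?C x" by (simp add: chord_def)
    then show ?thesis by blast
  qed
  have ne2: "chord u K y \<noteq> {}"
  proof -
    obtain c where "c \<in> K" "y = proj_perp u c" using qy by auto
    then have "y + (c \<bullet> u) *\<^sub>R u \<in> K" by (simp add: proj_perp_def)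
    then have "c \<bullet> u \<in> chord u K y" by (simp add: chord_def)
    then show ?thesis by blast
  qed
  define a1 where "a1 = Inf (chord u ?C x)"
  define b1 where "b1 = Sup (chord u ?C x)"
  define a2 where "a2 = Inf (chord u K y)"
  define b2 where "b2 = Sup (chord u K y)"
  have a1: "x + a1 *\<^sub>R u \<in> ?C" and b1: "x + b1 *\<^sub>R u \<in> ?C"
    using chord_SupInf[OF C u ne1] by (auto simp: a1_def b1_def chord_def)
  have a2: "y + a2 *\<^sub>R u \<in> K" and b2: "y + b2 *\<^sub>R u \<in> K"
    using chord_SupInf[OF K(1) u ne2] by (auto simp: a2_def b2_def chord_def)
  have dC: "norm (k - c) \<le> 1" if "k \<in> K" "c \<in> ?C" for k c
    using that by (auto simp: cdual_def dist_norm)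
  define w where "w = y - x"
  have w0: "w \<bullet> u = 0" unfolding w_def x_def y_def using proj_inner[OF u] by (simp add: inner_diff_left)
  have e1: "(norm w)^2 + (a2 - b1)^2 \<le> 1"
  proof -
    have "norm (w + (a2 - b1) *\<^sub>R u) \<le> 1"
      using dC[OF a2 b1] by (simp add: w_def algebra_simps)
    then have "(norm (w + (a2 - b1) *\<^sub>R u))^2 \<le> 1"
      by (simp add: power_le_one)
    then show ?thesis using norm_orth[OF w0 u] by simp
  qed
  have e2: "(norm w)^2 + (b2 - a1)^2 \<le> 1"
  proof -
    have "norm (w + (b2 - a1) *\<^sub>R u) \<le> 1"
      using dC[OF b2 a1] by (simp add: w_def algebra_simps)
    then have "(norm (w + (b2 - a1) *\<^sub>R u))^2 \<le> 1"
      by (simp add: power_le_one)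
    then show ?thesis using norm_orth[OF w0 u] by simp
  qed
  have qp: "q - p = w + (q \<bullet> u - p \<bullet> u) *\<^sub>R u"
    unfolding w_def x_def y_def proj_perp_def by (simp add: algebra_simps)
  have st: "\<bar>q \<bullet> u - p \<bullet> u\<bar> \<le> ((b1 - a2) + (b2 - a1)) / 2"
  proof -
    have h1: "\<bar>p \<bullet> u\<bar> \<le> (b1 - a1) / 2" using px(2) unfolding hh_def a1_def b1_def .
    have h2: "\<bar>q \<bullet> u\<bar> \<le> (b2 - a2) / 2" using qy(2) unfolding hh_def a2_def b2_def .
    have h3: "\<bar>q \<bullet> u - p \<bullet> u\<bar> \<le> \<bar>q \<bullet> u\<bar> + \<bar>p \<bullet> u\<bar>" by (rule abs_triangle_ineq4)
    have "(b1 - a1) / 2 + (b2 - a2) / 2 = ((b1 - a2) + (b2 - a1)) / 2" by (simp add: field_simps)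
    then show ?thesis using h1 h2 h3 by linarith
  qed
  have "\<bar>q \<bullet> u - p \<bullet> u\<bar>^2 \<le> (((b1 - a2) + (b2 - a1)) / 2)^2"
    by (rule power_mono[OF st abs_ge_zero])
  also have "\<dots> \<le> 1 - (norm w)^2"
    by (rule avg_sq) (use e1 e2 in \<open>simp_all add: power2_commute\<close>)
  finally have f1: "\<bar>q \<bullet> u - p \<bullet> u\<bar>^2 \<le> 1 - (norm w)^2" .
  have f2: "(norm (q - p))^2 = (norm w)^2 + (q \<bullet> u - p \<bullet> u)^2"
    unfolding qp by (rule norm_orth[OF w0 u])
  have "(norm (q - p))^2 \<le> 1^2" using f1 f2 unfolding power2_abs by simp
  then have "norm (q - p) \<le> 1" by (rule power2_le_imp_le) simp
  then show ?thesis by (simp add: dist_norm)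
qed


lemma chord_proj_ne:
  assumes "x \<in> proj_perp u ` L"
  shows "chord u L x \<noteq> {}"
proof -
  obtain c where c: "c \<in> L" "x = proj_perp u c" using assms by auto
  then have "x + (c \<bullet> u) *\<^sub>R u \<in> L" by (simp add: proj_perp_def)
  then have "c \<bullet> u \<in> chord u L x" by (simp add: chord_def)
  then show ?thesis by blast
qed

lemma steiner_borel:
  fixes L :: "'a::euclidean_space set"
  assumes L: "compact L" "convex L" and u: "norm u = 1"
  shows "steiner u L \<in> sets borel"
proof -
  define P where "P = proj_perp u ` L"
  define Q where "Q = {wt :: 'a \<times> real. proj_perp u (fst wt) + snd wt *\<^sub>R u \<in> L}"
  define g where "g = (\<lambda>w. measure lborel (chord u L (proj_perp u w)))"
  have contp: "continuous_on UNIV (proj_perp u)"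
    unfolding proj_perp_def by (intro continuous_intros)
  have Pc: "compact P" unfolding P_def
    by (rule compact_continuous_image[OF continuous_on_subset[OF contp] L(1)]) auto
  have Qc: "closed Q"
  proof -
    have "Q = (\<lambda>wt. proj_perp u (fst wt) + snd wt *\<^sub>R u) -` L" by (auto simp: Q_def)
    moreover have "closed ((\<lambda>wt::'a\<times>real. proj_perp u (fst wt) + snd wt *\<^sub>R u) -` L)"
      by (rule continuous_closed_vimage) (auto intro!: continuous_intros simp: proj_perp_def L compact_imp_closed)
    ultimately show ?thesis by simp
  qed
  have Qs: "Q \<in> sets (lborel \<Otimes>\<^sub>M lborel)"
  proof -
    have "sets ((lborel::'a measure) \<Otimes>\<^sub>M (lborel::real measure)) = sets (borel \<Otimes>\<^sub>M borel)"
      by (rule sets_pair_measure_cong) simp_all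
    also have "\<dots> = sets (borel :: ('a \<times> real) measure)" by (simp only: borel_prod)
    finally show ?thesis using borel_closed[OF Qc] by simp
  qed
  have "(\<lambda>w. emeasure lborel (Pair w -` Q)) \<in> borel_measurable (lborel :: 'a measure)"
    by (rule lborel.measurable_emeasure_Pair[OF Qs])
  moreover have "Pair w -` Q = chord u L (proj_perp u w)" for w
    by (auto simp: Q_def chord_def)
  ultimately have "(\<lambda>w. emeasure lborel (chord u L (proj_perp u w))) \<in> borel_measurable borel"
    by simp
  then have gm[measurable]: "g \<in> borel_measurable borel"
    unfolding g_def measure_def by measurable
  have pm[measurable]: "proj_perp u \<in> borel_measurable borel"
    by (rule borel_measurable_continuous_onI[OF contp])
  have Pm[measurable]: "P \<in> sets borel" using Pc by (rule borel_compact)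
  have eq: "steiner u L = {w \<in> space borel. proj_perp u w \<in> P \<and> 2 * \<bar>w \<bullet> u\<bar> \<le> g w}"
  proof (intro set_eqI iffI)
    fix w assume "w \<in> steiner u L"
    then have w: "proj_perp u w \<in> P" "\<bar>w \<bullet> u\<bar> \<le> hh u L (proj_perp u w)"
      using iffD1[OF steiner_iff[OF u]] unfolding P_def by blast+
    have ne: "chord u L (proj_perp u w) \<noteq> {}" using w(1) chord_proj_ne unfolding P_def by blast
    have "g w = Sup (chord u L (proj_perp u w)) - Inf (chord u L (proj_perp u w))"
      unfolding g_def by (subst chord_interval[OF L u ne]) (simp add: chord_SupInf(3)[OF L(1) u ne])
    then show "w \<in> {w \<in> space borel. proj_perp u w \<in> P \<and> 2 * \<bar>w \<bullet> u\<bar> \<le> g w}"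
      using w by (simp add: hh_def)
  next
    fix w assume "w \<in> {w \<in> space borel. proj_perp u w \<in> P \<and> 2 * \<bar>w \<bullet> u\<bar> \<le> g w}"
    then have w: "proj_perp u w \<in> P" "2 * \<bar>w \<bullet> u\<bar> \<le> g w" by auto
    have ne: "chord u L (proj_perp u w) \<noteq> {}" using w(1) chord_proj_ne unfolding P_def by blast
    have "g w = Sup (chord u L (proj_perp u w)) - Inf (chord u L (proj_perp u w))"
      unfolding g_def by (subst chord_interval[OF L u ne]) (simp add: chord_SupInf(3)[OF L(1) u ne])
    then show "w \<in> steiner u L"
      using w steiner_iff[OF u] unfolding P_def hh_def by simp
  qed
  show ?thesis unfolding eq by measurable
qed

lemma chord_meas_eq:
  fixes L :: "'a::euclidean_space set"
  assumes L: "compact L" "convex L" and u: "norm u = 1"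
  shows "emeasure lborel (chord u (steiner u L) z) = emeasure lborel (chord u L z)"
proof -
  define x where "x = proj_perp u z"
  define c where "c = z \<bullet> u"
  have uu: "u \<bullet> u = 1" using u by (simp add: dot_square_norm)
  have zt: "z + t *\<^sub>R u = x + (c + t) *\<^sub>R u" for t
    unfolding x_def c_def proj_perp_def by (simp add: algebra_simps)
  have pzt: "proj_perp u (z + t *\<^sub>R u) = x" for t
    unfolding x_def by (rule proj_add[OF u])
  have izt: "(z + t *\<^sub>R u) \<bullet> u = c + t" for t
    unfolding c_def by (simp add: inner_add_left uu)
  show ?thesis
  proof (cases "x \<in> proj_perp u ` L")
    case False
    have n1: "z + t *\<^sub>R u \<notin> steiner u L" for t
      using steiner_iff[OF u, of "z + t *\<^sub>R u" L] False pzt[of t] by simp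
    have n2: "z + t *\<^sub>R u \<notin> L" for t
    proof
      assume "z + t *\<^sub>R u \<in> L"
      then have "proj_perp u (z + t *\<^sub>R u) \<in> proj_perp u ` L" by (rule imageI)
      with False pzt[of t] show False by simp
    qed
    have "chord u (steiner u L) z = {}" using n1 by (simp add: chord_def)
    moreover have "chord u L z = {}" using n2 by (simp add: chord_def)
    ultimately show ?thesis by simp
  next
    case True
    have ne: "chord u L x \<noteq> {}" using True by (rule chord_proj_ne)
    define a where "a = Inf (chord u L x)"
    define b where "b = Sup (chord u L x)"
    have ab: "a \<le> b" using chord_SupInf(3)[OF L(1) u ne] by (simp add: a_def b_def)
    have ci: "chord u L x = {a..b}" using chord_interval[OF L u ne] by (simp add: a_def b_def)
    have e1: "chord u L z = {a - c .. b - c}"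
    proof -
      have "t \<in> chord u L z \<longleftrightarrow> c + t \<in> chord u L x" for t
        by (simp add: chord_def zt)
      then show ?thesis using ci by auto
    qed
    have hx: "hh u L x = (b - a) / 2" by (simp add: hh_def a_def b_def)
    have e2: "chord u (steiner u L) z = {- ((b - a) / 2) - c .. (b - a) / 2 - c}"
    proof (intro set_eqI)
      fix t
      have "t \<in> chord u (steiner u L) z \<longleftrightarrow> z + t *\<^sub>R u \<in> steiner u L" by (simp add: chord_def)
      also have "\<dots> \<longleftrightarrow> proj_perp u (z + t *\<^sub>R u) \<in> proj_perp u ` L \<and>
          \<bar>(z + t *\<^sub>R u) \<bullet> u\<bar> \<le> hh u L (proj_perp u (z + t *\<^sub>R u))" by (rule steiner_iff[OF u])
      also have "\<dots> \<longleftrightarrow> \<bar>c + t\<bar> \<le> (b - a) / 2" unfolding pzt izt hx using True by simp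
      also have "\<dots> \<longleftrightarrow> t \<in> {- ((b - a) / 2) - c .. (b - a) / 2 - c}" unfolding abs_le_iff atLeastAtMost_iff by (intro iffI conjI; elim conjE; linarith)
      finally show "t \<in> chord u (steiner u L) z \<longleftrightarrow> t \<in> {- ((b - a) / 2) - c .. (b - a) / 2 - c}" .
    qed
    have l1: "a - c \<le> b - c" using ab by simp
    have l2: "- ((b - a) / 2) - c \<le> (b - a) / 2 - c" using ab by simp
    have "(b - a) / 2 - c - (- ((b - a) / 2) - c) = b - c - (a - c)" by (simp add: field_simps)
    then show ?thesis unfolding e1 e2 emeasure_lborel_Icc[OF l1] emeasure_lborel_Icc[OF l2] by simp
  qed
qed

lemma steiner_vol:
  fixes L :: "'a::euclidean_space set"
  assumes L: "compact L" "convex L" and u: "norm u = 1"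
  shows "emeasure lborel (steiner u L) = emeasure lborel L"
  using vol_formula[OF steiner_borel[OF L u] u] vol_formula[OF borel_compact[OF L(1)] u]
    chord_meas_eq[OF L u] by simp


theorem theorem5p8:
  fixes K :: "'a::euclidean_space set" and u :: 'a
  assumes "convex_body K" and "norm u = 1"
  shows "steiner u (cdual K) \<subseteq> conv_c (steiner u (cdual K))
       \<and> conv_c (steiner u (cdual K)) \<subseteq> cdual (steiner u K)
       \<and> measure lebesgue K * measure lebesgue (cdual K)
           \<le> measure lebesgue (steiner u K) * measure lebesgue (cdual (steiner u K))"
proof -
  have u: "norm u = 1" by fact
  have Kc: "compact K" and Kv: "convex K" and Ki: "interior K \<noteq> {}"
    using assms(1) by (auto simp: convex_body_def)
  have Kne: "K \<noteq> {}" using Ki interior_subset by blast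
  define C where "C = cdual K"
  have Cc: "compact C" unfolding C_def by (rule cdual_compact[OF Kne])
  have Cv: "convex C" unfolding C_def by (rule cdual_convex)
  have sub: "steiner u C \<subseteq> cdual (steiner u K)"
  proof
    fix p assume p: "p \<in> steiner u C"
    have "dist q p \<le> 1" if "q \<in> steiner u K" for q
      using key_dist[OF Kc Kne u p[unfolded C_def] that] .
    then show "p \<in> cdual (steiner u K)" by (auto simp: cdual_def)
  qed
  have part1: "steiner u C \<subseteq> conv_c (steiner u C)"
    unfolding conv_c_def by (rule sub_cc)
  have part2: "conv_c (steiner u C) \<subseteq> cdual (steiner u K)"
  proof -
    have "conv_c (steiner u C) \<subseteq> cdual (cdual (cdual (steiner u K)))"
      unfolding conv_c_def by (intro cdual_anti sub)
    also have "\<dots> \<subseteq> cdual (steiner u K)"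
      by (intro cdual_anti sub_cc)
    finally show ?thesis .
  qed
  have SKne: "steiner u K \<noteq> {}"
  proof -
    obtain k where k: "k \<in> K" using Kne by blast
    define x where "x = proj_perp u k"
    have xP: "x \<in> proj_perp u ` K" using k by (simp add: x_def)
    have ne: "chord u K x \<noteq> {}" using xP by (rule chord_proj_ne)
    have h0: "0 \<le> hh u K x" using chord_SupInf(3)[OF Kc u ne] by (simp add: hh_def)
    have x0: "x \<bullet> u = 0" unfolding x_def by (rule proj_inner[OF u])
    have px: "proj_perp u x = x" unfolding x_def by (rule proj_idem[OF u])
    have "x \<in> steiner u K" using steiner_iff[OF u, of x K] xP h0 x0 px by simp
    then show ?thesis by blast
  qed
  define D where "D = cdual (steiner u K)"
  have Dc: "compact D" unfolding D_def by (rule cdual_compact[OF SKne])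
  have mK: "measure lebesgue K = measure lebesgue (steiner u K)"
  proof -
    have "measure lborel K = measure lborel (steiner u K)"
      unfolding measure_def using steiner_vol[OF Kc Kv u] by simp
    then show ?thesis
      using borel_compact[OF Kc] steiner_borel[OF Kc Kv u] by simp
  qed
  have mC: "measure lebesgue C = measure lebesgue (steiner u C)"
  proof -
    have "measure lborel C = measure lborel (steiner u C)"
      unfolding measure_def using steiner_vol[OF Cc Cv u] by simp
    then show ?thesis
      using borel_compact[OF Cc] steiner_borel[OF Cc Cv u] by simp
  qed
  have mD: "measure lebesgue (steiner u C) \<le> measure lebesgue D"
  proof -
    have "measure lborel (steiner u C) \<le> measure lborel D"
      by (rule measure_mono_fmeasurable[OF sub[folded D_def]])
        (use steiner_borel[OF Cc Cv u] fmeasurable_compact[OF Dc] in simp_all)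
    then show ?thesis
      using borel_compact[OF Dc] steiner_borel[OF Cc Cv u] by simp
  qed
  have part3: "measure lebesgue K * measure lebesgue C \<le> measure lebesgue (steiner u K) * measure lebesgue D"
    unfolding mK mC by (rule mult_left_mono[OF mD measure_nonneg])
  show ?thesis using part1 part2 part3 unfolding C_def D_def by blast
qed

end
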